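(* Let $\eta$ and $\hat\eta$ be Borel probability measures on $\mathbb{R}$. If $W_1(\eta,\hat\eta)\le\varepsilon$, then $|\mu_\eta-\mu_{\hat\eta}|\le\varepsilon$ and $|\mathrm{MAD}_\eta-\mathrm{MAD}_{\hat\eta}|\le2\varepsilon$. If in addition $\eta$ has a Lebesgue density bounded by $c<\infty$, then $$|I_{\eta,a,b}-I_{\hat\eta,a,b}|\le2(2c\,\varepsilon)^{1/2}\qquad(-\infty\le a<b\le\infty).$$ If $W_2(\eta,\hat\eta)\le\varepsilon$, then $W_1(\eta,\hat\eta)\le\varepsilon$, $$|\sigma_\eta-\sigma_{\hat\eta}|\le\tfrac12(2^{1/2}+6^{1/2})\varepsilon\le2\varepsilon,$$ and $$|\sigma_\eta^2-\sigma_{\hat\eta}^2|\le2^{3/2}\min(\sigma_\eta,\sigma_{\hat\eta})\varepsilon+(1+3\cdot2^{1/2})\varepsilon^2\le3\min(\sigma_\eta,\sigma_{\hat\eta})\varepsilon+5.25\,\varepsilon^2.$$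
   Context: $W_p(\eta,\hat\eta)=\inf_\gamma\{\int|\theta-\hat\theta|^p\gamma(d\theta,d\hat\theta)\}^{1/p}$ over couplings $\gamma$ of $\eta,\hat\eta$. For $\Theta\sim\xi$ on $\mathbb{R}$: $\mu_\xi=\mathbb{E}\Theta$, $\sigma_\xi^2$ its variance, $\mathrm{MAD}_\xi=\mathbb{E}|\Theta-\mu_\xi|$, $I_{\xi,a,b}=\mathbb{E}\{\mathbf 1_{[a,b]}(\Theta)\}$. *)

theory Defs
  imports "HOL-Probability.Probability"
begin

definition couplings :: "real measure \<Rightarrow> real measure \<Rightarrow> (real \<times> real) measure set" where
  "couplings \<eta> \<eta>' = {\<gamma>. prob_space \<gamma> \<and> sets \<gamma> = sets (borel \<Otimes>\<^sub>M borel) \<and>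
      distr \<gamma> borel fst = \<eta> \<and> distr \<gamma> borel snd = \<eta>'}"

definition wass_cost :: "real \<Rightarrow> real measure \<Rightarrow> real measure \<Rightarrow> ennreal" where
  "wass_cost p \<eta> \<eta>' = (INF \<gamma>\<in>couplings \<eta> \<eta>'. \<integral>\<^sup>+ z. ennreal (\<bar>fst z - snd z\<bar> powr p) \<partial>\<gamma>)"

definition Wass :: "real \<Rightarrow> real measure \<Rightarrow> real measure \<Rightarrow> ennreal" where
  "Wass p \<eta> \<eta>' = (if wass_cost p \<eta> \<eta>' = \<infinity> then \<infinity>
                    else ennreal ((enn2real (wass_cost p \<eta> \<eta>')) powr (1 / p)))"

definition mean_of :: "real measure \<Rightarrow> real" where
  "mean_of \<xi> = (\<integral>x. x \<partial>\<xi>)"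

definition var_of :: "real measure \<Rightarrow> real" where
  "var_of \<xi> = (\<integral>x. (x - mean_of \<xi>)\<^sup>2 \<partial>\<xi>)"

definition sd_of :: "real measure \<Rightarrow> real" where
  "sd_of \<xi> = sqrt (var_of \<xi>)"

definition MAD_of :: "real measure \<Rightarrow> real" where
  "MAD_of \<xi> = (\<integral>x. \<bar>x - mean_of \<xi>\<bar> \<partial>\<xi>)"

definition I_of :: "real measure \<Rightarrow> ereal \<Rightarrow> ereal \<Rightarrow> real" where
  "I_of \<xi> a b = measure \<xi> {x. a \<le> ereal x \<and> ereal x \<le> b}"

end

theory Submission
  imports Defs
begin

lemma coup_basic:
  assumes "\<gamma> \<in> couplings \<eta> \<eta>'"
  shows "prob_space \<gamma>" "measurable \<gamma> N = measurable borel N" "space \<gamma> = UNIV"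
    "distr \<gamma> borel fst = \<eta>" "distr \<gamma> borel snd = \<eta>'"
    "fst \<in> measurable \<gamma> borel" "snd \<in> measurable \<gamma> borel"
    "measurable \<gamma> N = measurable (borel \<Otimes>\<^sub>M borel) N"
proof -
  have s: "sets \<gamma> = sets (borel :: (real \<times> real) measure)"
  proof -
    have "sets \<gamma> = sets (borel \<Otimes>\<^sub>M borel)" using assms unfolding couplings_def by auto
    then show ?thesis by (simp only: borel_prod)
  qed
  show "prob_space \<gamma>" "distr \<gamma> borel fst = \<eta>" "distr \<gamma> borel snd = \<eta>'"
    using assms unfolding couplings_def by auto
  show "measurable \<gamma> N = measurable (borel \<Otimes>\<^sub>M borel) N"
    using assms unfolding couplings_def by (intro measurable_cong_sets) auto
  show m: "\<And>N. measurable \<gamma> N = measurable borel N"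
    by (rule measurable_cong_sets[OF s refl])
  show "space \<gamma> = UNIV" using sets_eq_imp_space_eq[OF s] by simp
  show "fst \<in> measurable \<gamma> borel" "snd \<in> measurable \<gamma> borel" unfolding m
    using measurable_fst[of "borel::real measure" "borel::real measure"]
      measurable_snd[of "borel::real measure" "borel::real measure"]
    by (simp_all only: borel_prod)
qed

lemma coup_int_fst:
  fixes g :: "real \<Rightarrow> real"
  assumes "\<gamma> \<in> couplings \<eta> \<eta>'" "g \<in> borel_measurable borel" "integrable \<eta> g"
  shows "integrable \<gamma> (\<lambda>z. g (fst z))" "(\<integral>z. g (fst z) \<partial>\<gamma>) = integral\<^sup>L \<eta> g"
proof -
  note c = coup_basic[OF assms(1)]
  show "integrable \<gamma> (\<lambda>z. g (fst z))"
    using integrable_distr_eq[OF c(6) assms(2)] assms(3) c(4) by simp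
  show "(\<integral>z. g (fst z) \<partial>\<gamma>) = integral\<^sup>L \<eta> g"
    using integral_distr[OF c(6) assms(2)] c(4) by simp
qed

lemma coup_int_snd:
  fixes g :: "real \<Rightarrow> real"
  assumes "\<gamma> \<in> couplings \<eta> \<eta>'" "g \<in> borel_measurable borel" "integrable \<eta>' g"
  shows "integrable \<gamma> (\<lambda>z. g (snd z))" "(\<integral>z. g (snd z) \<partial>\<gamma>) = integral\<^sup>L \<eta>' g"
proof -
  note c = coup_basic[OF assms(1)]
  show "integrable \<gamma> (\<lambda>z. g (snd z))"
    using integrable_distr_eq[OF c(7) assms(2)] assms(3) c(5) by simp
  show "(\<integral>z. g (snd z) \<partial>\<gamma>) = integral\<^sup>L \<eta>' g"
    using integral_distr[OF c(7) assms(2)] c(5) by simp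
qed

lemma coup_meas_fst:
  assumes "\<gamma> \<in> couplings \<eta> \<eta>'" "A \<in> sets borel"
  shows "measure \<gamma> {z. fst z \<in> A} = measure \<eta> A"
proof -
  note c = coup_basic[OF assms(1)]
  have "measure \<eta> A = measure \<gamma> (fst -` A \<inter> space \<gamma>)"
    using measure_distr[OF c(6) assms(2)] c(4) by simp
  then show ?thesis using c(3) by (simp add: vimage_def)
qed

lemma coup_meas_snd:
  assumes "\<gamma> \<in> couplings \<eta> \<eta>'" "A \<in> sets borel"
  shows "measure \<gamma> {z. snd z \<in> A} = measure \<eta>' A"
proof -
  note c = coup_basic[OF assms(1)]
  have "measure \<eta>' A = measure \<gamma> (snd -` A \<inter> space \<gamma>)"
    using measure_distr[OF c(7) assms(2)] c(5) by simp
  then show ?thesis using c(3) by (simp add: vimage_def)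
qed

lemma abs_powr2: "\<bar>x::real\<bar> powr 2 = x\<^sup>2"
  by (cases "x = 0") (simp_all add: powr_realpow)

lemma W1_approx:
  assumes "Wass 1 \<eta> \<eta>' \<le> ennreal \<epsilon>" "\<epsilon> < r" "0 \<le> \<epsilon>"
  shows "\<exists>\<gamma>\<in>couplings \<eta> \<eta>'. (\<integral>\<^sup>+z. ennreal \<bar>fst z - snd z\<bar> \<partial>\<gamma>) < ennreal r"
proof -
  let ?w = "wass_cost 1 \<eta> \<eta>'"
  have ninf: "?w \<noteq> \<infinity>" using assms(1) unfolding Wass_def by (auto simp: top_unique split: if_splits)
  have "ennreal (enn2real ?w) \<le> ennreal \<epsilon>" using assms(1) ninf unfolding Wass_def by simp
  then have "?w \<le> ennreal \<epsilon>" using ninf by (simp add: ennreal_enn2real_if)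
  also have "\<dots> < ennreal r" using assms(2,3) by (intro ennreal_lessI) auto
  finally have "?w < ennreal r" .
  then show ?thesis unfolding wass_cost_def INF_less_iff by simp
qed

lemma W2_approx:
  assumes "Wass 2 \<eta> \<eta>' \<le> ennreal \<epsilon>" "\<epsilon> < r" "0 \<le> \<epsilon>"
  shows "\<exists>\<gamma>\<in>couplings \<eta> \<eta>'. (\<integral>\<^sup>+z. ennreal ((fst z - snd z)\<^sup>2) \<partial>\<gamma>) < ennreal (r\<^sup>2)"
proof -
  let ?w = "wass_cost 2 \<eta> \<eta>'"
  have ninf: "?w \<noteq> \<infinity>" using assms(1) unfolding Wass_def by (auto simp: top_unique split: if_splits)
  have "ennreal (sqrt (enn2real ?w)) \<le> ennreal \<epsilon>" using assms(1) ninf unfolding Wass_def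
    by (simp add: powr_half_sqrt)
  then have "sqrt (enn2real ?w) \<le> \<epsilon>" using assms(3) by simp
  then have "enn2real ?w \<le> \<epsilon>\<^sup>2"
    by (metis enn2real_nonneg real_le_lsqrt real_sqrt_le_iff sqrt_le_D)
  also have "\<dots> < r\<^sup>2" using assms(2,3) by (simp add: power_strict_mono)
  finally have "enn2real ?w < r\<^sup>2" .
  then have "ennreal (enn2real ?w) < ennreal (r\<^sup>2)"
    using assms(2,3) by (intro ennreal_lessI) auto
  then have "?w < ennreal (r\<^sup>2)" using ninf by (simp add: ennreal_enn2real_if)
  then show ?thesis unfolding wass_cost_def INF_less_iff by (simp add: abs_powr2)
qed

lemma coup_abs_int:
  assumes "\<gamma> \<in> couplings \<eta> \<eta>'" "(\<integral>\<^sup>+z. ennreal \<bar>fst z - snd z\<bar> \<partial>\<gamma>) < ennreal r"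
  shows "integrable \<gamma> (\<lambda>z. \<bar>fst z - snd z\<bar>)" "(\<integral>z. \<bar>fst z - snd z\<bar> \<partial>\<gamma>) < r"
proof -
  note c = coup_basic[OF assms(1)]
  have meas: "(\<lambda>z. \<bar>fst z - snd z\<bar>) \<in> borel_measurable \<gamma>" unfolding c(8) by measurable
  show i: "integrable \<gamma> (\<lambda>z. \<bar>fst z - snd z\<bar>)"
    using assms(2) by (intro integrableI_nonneg meas) (auto simp: top.not_eq_extremum order_less_trans)
  have "ennreal (\<integral>z. \<bar>fst z - snd z\<bar> \<partial>\<gamma>) < ennreal r"
    using nn_integral_eq_integral[OF i] assms(2) by simp
  then show "(\<integral>z. \<bar>fst z - snd z\<bar> \<partial>\<gamma>) < r"
    by (simp add: ennreal_less_iff)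
qed

lemma part_mean:
  assumes "\<gamma> \<in> couplings \<eta> \<eta>'" "(\<integral>\<^sup>+z. ennreal \<bar>fst z - snd z\<bar> \<partial>\<gamma>) < ennreal r"
    and "integrable \<eta> (\<lambda>x. x)" "integrable \<eta>' (\<lambda>x. x)"
    and pe: "prob_space \<eta>" "prob_space \<eta>'"
  shows "\<bar>mean_of \<eta> - mean_of \<eta>'\<bar> < r" "\<bar>MAD_of \<eta> - MAD_of \<eta>'\<bar> < 2 * r"
proof -
  note c = coup_basic[OF assms(1)]
  interpret prob_space \<gamma> by (rule c(1))
  note D = coup_abs_int[OF assms(1,2)]
  have f1: "integrable \<gamma> fst" "(\<integral>z. fst z \<partial>\<gamma>) = mean_of \<eta>"
    using coup_int_fst[OF assms(1) _ assms(3)] unfolding mean_of_def by auto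
  have s1: "integrable \<gamma> snd" "(\<integral>z. snd z \<partial>\<gamma>) = mean_of \<eta>'"
    using coup_int_snd[OF assms(1) _ assms(4)] unfolding mean_of_def by auto
  have "mean_of \<eta> - mean_of \<eta>' = (\<integral>z. fst z - snd z \<partial>\<gamma>)"
    using f1 s1 by (simp add: integral_diff)
  also have "\<bar>\<dots>\<bar> \<le> (\<integral>z. \<bar>fst z - snd z\<bar> \<partial>\<gamma>)" by (rule integral_abs_bound)
  finally have M: "\<bar>mean_of \<eta> - mean_of \<eta>'\<bar> \<le> (\<integral>z. \<bar>fst z - snd z\<bar> \<partial>\<gamma>)" .
  then show "\<bar>mean_of \<eta> - mean_of \<eta>'\<bar> < r" using D(2) by simp
  let ?m = "mean_of \<eta>" and ?m' = "mean_of \<eta>'"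
  have ia: "integrable \<eta> (\<lambda>x. \<bar>x - ?m\<bar>)"
    using Bochner_Integration.integrable_diff[OF assms(3) finite_measure.integrable_const[OF prob_space.finite_measure[OF pe(1)]]]
    by (intro integrable_abs) simp
  have ib: "integrable \<eta>' (\<lambda>x. \<bar>x - ?m'\<bar>)"
    using Bochner_Integration.integrable_diff[OF assms(4) finite_measure.integrable_const[OF prob_space.finite_measure[OF pe(2)]]]
    by (intro integrable_abs) simp
  have f2: "integrable \<gamma> (\<lambda>z. \<bar>fst z - ?m\<bar>)" "(\<integral>z. \<bar>fst z - ?m\<bar> \<partial>\<gamma>) = MAD_of \<eta>"
    using coup_int_fst[OF assms(1) _ ia] unfolding MAD_of_def by auto
  have s2: "integrable \<gamma> (\<lambda>z. \<bar>snd z - ?m'\<bar>)" "(\<integral>z. \<bar>snd z - ?m'\<bar> \<partial>\<gamma>) = MAD_of \<eta>'"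
    using coup_int_snd[OF assms(1) _ ib] unfolding MAD_of_def by auto
  have "MAD_of \<eta> - MAD_of \<eta>' = (\<integral>z. \<bar>fst z - ?m\<bar> - \<bar>snd z - ?m'\<bar> \<partial>\<gamma>)"
    using f2 s2 by (simp add: integral_diff)
  also have "\<bar>\<dots>\<bar> \<le> (\<integral>z. \<bar>fst z - snd z\<bar> + \<bar>?m - ?m'\<bar> \<partial>\<gamma>)"
    using f2 s2 D(1) by (intro integral_abs_bound_integral) auto
  also have "\<dots> = (\<integral>z. \<bar>fst z - snd z\<bar> \<partial>\<gamma>) + \<bar>?m - ?m'\<bar>"
    using D(1) by (simp add: integral_add prob_space)
  finally show "\<bar>MAD_of \<eta> - MAD_of \<eta>'\<bar> < 2 * r" using M D(2) by simp
qed



lemma incl1: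
  fixes a b :: ereal
  assumes "a \<le> ereal x" "ereal x \<le> b" "\<not> (a \<le> ereal y \<and> ereal y \<le> b)" "\<bar>x - y\<bar> < t"
  shows "x \<in> {real_of_ereal a ..< real_of_ereal a + t} \<union> {real_of_ereal b - t <.. real_of_ereal b}"
  using assms by (cases a; cases b) auto

lemma incl2:
  fixes a b :: ereal
  assumes "\<not> (a \<le> ereal x \<and> ereal x \<le> b)" "a \<le> ereal y" "ereal y \<le> b" "\<bar>x - y\<bar> < t"
  shows "x \<in> {real_of_ereal a - t <..< real_of_ereal a} \<union> {real_of_ereal b <..< real_of_ereal b + t}"
  using assms by (cases a; cases b) auto

lemma S_meas: "{x::real. a \<le> ereal x \<and> ereal x \<le> b} \<in> sets borel"
  by measurable

lemma dens_bound:
  fixes f :: "real \<Rightarrow> real"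
  assumes "f \<in> borel_measurable borel" "\<forall>x. 0 \<le> f x \<and> f x \<le> c"
    "\<eta> = density lborel (\<lambda>x. ennreal (f x))" "A \<in> sets borel" "emeasure lborel A = ennreal L" "0 \<le> L"
  shows "measure \<eta> A \<le> c * L"
proof -
  have c0: "0 \<le> c" using assms(2) by (meson order_trans)
  have "emeasure \<eta> A = (\<integral>\<^sup>+x. ennreal (f x) * indicator A x \<partial>lborel)"
    using assms(1,3,4) by (simp add: emeasure_density)
  also have "\<dots> \<le> (\<integral>\<^sup>+x. ennreal c * indicator A x \<partial>lborel)"
    using assms(2) by (intro nn_integral_mono) (auto simp: indicator_def intro: ennreal_leI)
  also have "\<dots> = ennreal c * emeasure lborel A"
    using assms(4) by (simp add: nn_integral_cmult_indicator)
  also have "\<dots> = ennreal (c * L)" using assms(5,6) c0 by (simp add: ennreal_mult)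
  finally have "emeasure \<eta> A \<le> ennreal (c * L)" .
  then show ?thesis unfolding measure_def using c0 assms(6)
    by (simp add: enn2real_leI)
qed

lemma meas3:
  assumes "finite_measure M" "A \<in> sets M" "B \<in> sets M" "C \<in> sets M" "D \<in> sets M" "A \<subseteq> B \<union> C \<union> D"
  shows "measure M A \<le> measure M B + measure M C + measure M D"
proof -
  interpret finite_measure M by fact
  have "measure M A \<le> measure M (B \<union> C \<union> D)" using assms by (intro finite_measure_mono) auto
  also have "\<dots> \<le> measure M (B \<union> C) + measure M D" using assms by (intro measure_subadditive) (auto simp: emeasure_finite)
  also have "\<dots> \<le> measure M B + measure M C + measure M D" using assms
    by (simp add: measure_subadditive emeasure_finite)
  finally show ?thesis .
qed

lemma opt_t:
  fixes c r :: real assumes "0 < c" "0 < r"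
  shows "\<exists>t>0. 2 * c * t + r / t \<le> 2 * sqrt (2 * c * r)"
proof -
  define s where "s = sqrt (2 * c * r)"
  have s0: "s > 0" using assms by (simp add: s_def)
  have ss: "s * s = 2 * c * r" using assms unfolding s_def by (simp flip: power2_eq_square)
  have "2 * c * (s / (2 * c)) + r / (s / (2 * c)) = s + (2 * c * r) / s"
    using assms s0 by (simp add: field_simps)
  also have "\<dots> = s + s" using ss s0 by (simp add: field_simps)
  finally show ?thesis using s0 assms by (intro exI[of _ "s / (2*c)"]) (simp add: s_def)
qed

lemma final_interval:
  fixes c \<epsilon> x :: real assumes "0 < c" "0 \<le> \<epsilon>"
    and H: "\<And>r. \<epsilon> < r \<Longrightarrow> x \<le> 2 * sqrt (2 * c * r)"
  shows "x \<le> 2 * sqrt (2 * c * \<epsilon>)"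
proof (rule dense_ge)
  fix y assume y: "2 * sqrt (2 * c * \<epsilon>) < y"
  have "0 \<le> sqrt (2 * c * \<epsilon>)" using assms by simp
  then have y0: "0 < y" using y by linarith
  have "(2 * sqrt (2 * c * \<epsilon>))\<^sup>2 < y\<^sup>2" using y assms by (intro power_strict_mono) auto
  then have "8 * c * \<epsilon> < y\<^sup>2" using assms by (simp add: power_mult_distrib)
  then have "\<epsilon> < y\<^sup>2 / (8 * c)" using assms by (simp add: field_simps)
  then have "x \<le> 2 * sqrt (2 * c * (y\<^sup>2 / (8 * c)))" by (rule H)
  also have "2 * c * (y\<^sup>2 / (8 * c)) = (y / 2)\<^sup>2" using assms by (simp add: field_simps power2_eq_square)
  finally show "x \<le> y" using y0 by simp
qed


lemma part_interval:
  fixes f :: "real \<Rightarrow> real"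
  assumes g: "\<gamma> \<in> couplings \<eta> \<eta>'" and nn: "(\<integral>\<^sup>+z. ennreal \<bar>fst z - snd z\<bar> \<partial>\<gamma>) < ennreal r"
    and f: "f \<in> borel_measurable borel" "\<forall>x. 0 \<le> f x \<and> f x \<le> c"
      "\<eta> = density lborel (\<lambda>x. ennreal (f x))"
    and pe: "prob_space \<eta>" and t: "0 < t"
  shows "\<bar>I_of \<eta> a b - I_of \<eta>' a b\<bar> \<le> 2 * c * t + r / t"
proof -
  note cb = coup_basic[OF g]
  interpret prob_space \<gamma> by (rule cb(1))
  note D = coup_abs_int[OF g nn]
  have sg: "sets \<gamma> = sets (borel \<Otimes>\<^sub>M borel)" using g unfolding couplings_def by auto
  define S where "S = {x::real. a \<le> ereal x \<and> ereal x \<le> b}"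
  have Sm[measurable]: "S \<in> sets borel" unfolding S_def by (rule S_meas)
  define la where "la = real_of_ereal a"
  define lb where "lb = real_of_ereal b"
  define J1 where "J1 = {la..<la+t} \<union> {lb-t<..lb}"
  define J2 where "J2 = {la-t<..<la} \<union> {lb<..<lb+t}"
  have J1m[measurable]: "J1 \<in> sets borel" "J2 \<in> sets borel" by (auto simp: J1_def J2_def)
  have I1: "I_of \<eta> a b = measure \<gamma> {z. fst z \<in> S}"
    using coup_meas_fst[OF g Sm] unfolding I_of_def S_def by simp
  have I2: "I_of \<eta>' a b = measure \<gamma> {z. snd z \<in> S}"
    using coup_meas_snd[OF g Sm] unfolding I_of_def S_def by simp
  define T where "T = {z::real\<times>real. t \<le> \<bar>fst z - snd z\<bar>}"
  have "measure \<gamma> {z\<in>space \<gamma>. \<bar>fst z - snd z\<bar> \<ge> t} \<le> (\<integral>z. \<bar>fst z - snd z\<bar> \<partial>\<gamma>) / t"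
    using D(1) t by (intro integral_Markov_inequality_measure[where A="space \<gamma>"]) auto
  also have "\<dots> \<le> r / t" using D(2) t by (simp add: divide_right_mono)
  finally have mT: "measure \<gamma> T \<le> r / t" unfolding T_def cb(3) by simp
  interpret E: prob_space \<eta> by (rule pe)
  have setsE: "sets \<eta> = sets borel" using f(3) by simp
  have bnd: "measure \<eta> A \<le> c * t" if "A \<in> sets borel" "emeasure lborel A = ennreal t" for A
    using dens_bound[OF f that] t by simp
  have "measure \<eta> J1 \<le> measure \<eta> {la..<la+t} + measure \<eta> {lb-t<..lb}"
    unfolding J1_def using setsE by (intro measure_subadditive) (auto simp: E.emeasure_finite)
  also have "\<dots> \<le> c * t + c * t" using t by (intro add_mono bnd) auto
  finally have dJ1: "measure \<eta> J1 \<le> 2 * c * t" by simp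
  have "measure \<eta> J2 \<le> measure \<eta> {la-t<..<la} + measure \<eta> {lb<..<lb+t}"
    unfolding J2_def using setsE by (intro measure_subadditive) (auto simp: E.emeasure_finite)
  also have "\<dots> \<le> c * t + c * t" using t by (intro add_mono bnd) auto
  finally have dJ2: "measure \<eta> J2 \<le> 2 * c * t" by simp
  have sp: "\<And>P. {z::real\<times>real. P z} = {z\<in>space (borel \<Otimes>\<^sub>M borel). P z}"
    by (simp add: space_pair_measure)
  have mA: "{z. fst z \<in> S} \<in> sets \<gamma>" "{z. snd z \<in> S} \<in> sets \<gamma>"
    "{z. fst z \<in> J1} \<in> sets \<gamma>" "{z. fst z \<in> J2} \<in> sets \<gamma>" "T \<in> sets \<gamma>"
    unfolding sg T_def by (subst sp, measurable)+
  have sub1: "{z. fst z \<in> S} \<subseteq> {z. snd z \<in> S} \<union> {z. fst z \<in> J1} \<union> T"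
  proof
    fix z :: "real \<times> real" assume z: "z \<in> {z. fst z \<in> S}"
    show "z \<in> {z. snd z \<in> S} \<union> {z. fst z \<in> J1} \<union> T"
    proof (cases "snd z \<in> S \<or> t \<le> \<bar>fst z - snd z\<bar>")
      case True then show ?thesis by (auto simp: T_def)
    next
      case False
      then have "fst z \<in> J1" using z incl1[of a "fst z" b "snd z" t]
        unfolding S_def J1_def la_def lb_def by auto
      then show ?thesis by simp
    qed
  qed
  have sub2: "{z. snd z \<in> S} \<subseteq> {z. fst z \<in> S} \<union> {z. fst z \<in> J2} \<union> T"
  proof
    fix z :: "real \<times> real" assume z: "z \<in> {z. snd z \<in> S}"
    show "z \<in> {z. fst z \<in> S} \<union> {z. fst z \<in> J2} \<union> T"
    proof (cases "fst z \<in> S \<or> t \<le> \<bar>fst z - snd z\<bar>")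
      case True then show ?thesis by (auto simp: T_def)
    next
      case False
      then have "fst z \<in> J2" using z incl2[of a "fst z" b "snd z" t]
        unfolding S_def J2_def la_def lb_def by auto
      then show ?thesis by simp
    qed
  qed
  have e1: "measure \<gamma> {z. fst z \<in> J1} = measure \<eta> J1" by (rule coup_meas_fst[OF g J1m(1)])
  have e2: "measure \<gamma> {z. fst z \<in> J2} = measure \<eta> J2" by (rule coup_meas_fst[OF g J1m(2)])
  have "measure \<gamma> {z. fst z \<in> S} \<le> measure \<gamma> {z. snd z \<in> S} + measure \<gamma> {z. fst z \<in> J1} + measure \<gamma> T"
    by (rule meas3[OF finite_measure_axioms mA(1,2,3,5) sub1])
  moreover have "measure \<gamma> {z. snd z \<in> S} \<le> measure \<gamma> {z. fst z \<in> S} + measure \<gamma> {z. fst z \<in> J2} + measure \<gamma> T"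
    by (rule meas3[OF finite_measure_axioms mA(2,1,4,5) sub2])
  ultimately show ?thesis unfolding I1 I2 using e1 e2 dJ1 dJ2 mT by linarith
qed



lemma sq_ints:
  fixes M :: "real measure"
  assumes "prob_space M" "sets M = sets borel" "integrable M (\<lambda>x. x\<^sup>2)"
  shows "integrable M (\<lambda>x. x)" "integrable M (\<lambda>x. (x - m)\<^sup>2)"
proof -
  interpret prob_space M by fact
  have meas: "(\<lambda>x. x) \<in> borel_measurable M" using assms(2) by (rule measurable_ident_sets)
  show i: "integrable M (\<lambda>x. x)"
    using square_integrable_imp_integrable[OF meas] assms(3) by simp
  have "integrable M (\<lambda>x. x\<^sup>2 - 2 * m * x + m\<^sup>2)"
  proof (intro Bochner_Integration.integrable_add Bochner_Integration.integrable_diff)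
    show "integrable M (\<lambda>x. x\<^sup>2)" by (rule assms(3))
    show "integrable M (\<lambda>x. 2 * m * x)" using i by (rule integrable_mult_right)
    show "integrable M (\<lambda>x. m\<^sup>2)" by simp
  qed
  moreover have "(\<lambda>x. x\<^sup>2 - 2 * m * x + m\<^sup>2) = (\<lambda>x. (x - m)\<^sup>2)"
    by (auto simp: power2_eq_square algebra_simps)
  ultimately show "integrable M (\<lambda>x. (x - m)\<^sup>2)" by simp
qed

lemma sd_real:
  fixes A B Q :: real
  assumes "0 \<le> A" "0 \<le> B" "\<And>s. 0 < s \<Longrightarrow> (1 - s) * A + (1 - 1 / s) * B \<le> Q"
  shows "(sqrt A - sqrt B)\<^sup>2 \<le> Q"
proof (cases "A = 0 \<or> B = 0")
  case True
  then show ?thesis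
  proof
    assume A0: "A = 0"
    show ?thesis
    proof (rule ccontr)
      assume "\<not> ?thesis"
      then have BQ: "B > Q" using A0 assms(2) by simp
      have Q0: "0 \<le> Q" using assms(3)[of 1] by simp
      then have "B > 0" using BQ by simp
      have "(1 - 1 / (2 * B / (B - Q))) * B \<le> Q" using assms(3)[of "2 * B / (B - Q)"] A0 BQ \<open>B > 0\<close> by simp
      moreover have "(1 - 1 / (2 * B / (B - Q))) * B = (B + Q) / 2" using BQ \<open>B > 0\<close> by (simp add: field_simps)
      ultimately show False using BQ by simp
    qed
  next
    assume B0: "B = 0"
    show ?thesis
    proof (rule ccontr)
      assume "\<not> ?thesis"
      then have AQ: "A > Q" using B0 assms(1) by simp
      have Q0: "0 \<le> Q" using assms(3)[of 1] by simp
      then have "A > 0" using AQ by simp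
      have "(1 - (A - Q) / (2 * A)) * A \<le> Q" using assms(3)[of "(A - Q) / (2 * A)"] B0 AQ \<open>A > 0\<close> by simp
      moreover have "(1 - (A - Q) / (2 * A)) * A = (A + Q) / 2" using AQ \<open>A > 0\<close> by (simp add: field_simps)
      ultimately show False using AQ by simp
    qed
  qed
next
  case False
  then have a: "sqrt A > 0" and b: "sqrt B > 0" using assms by auto
  have "(1 - sqrt B / sqrt A) * A + (1 - 1 / (sqrt B / sqrt A)) * B \<le> Q"
    using assms(3)[of "sqrt B / sqrt A"] a b by simp
  moreover have "(1 - sqrt B / sqrt A) * A + (1 - 1 / (sqrt B / sqrt A)) * B = (sqrt A - sqrt B)\<^sup>2"
  proof -
    have gen: "(1 - y / x) * (x * x) + (1 - 1 / (y / x)) * (y * y) = (x - y)\<^sup>2" if "x > 0" "y > 0" for x y :: real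
      using that by (simp add: field_simps power2_eq_square)
    have AB: "A = sqrt A * sqrt A" "B = sqrt B * sqrt B" using assms by auto
    show ?thesis using gen[OF a b] AB by metis
  qed
  ultimately show ?thesis by simp
qed

lemma pt_ineq:
  fixes u v s :: real assumes "0 < s"
  shows "(1 - s) * u\<^sup>2 + (1 - 1 / s) * v\<^sup>2 \<le> (u - v)\<^sup>2"
proof -
  have "0 \<le> (s * u - v)\<^sup>2 / s" using assms by simp
  also have "(s * u - v)\<^sup>2 / s = (u - v)\<^sup>2 - ((1 - s) * u\<^sup>2 + (1 - 1 / s) * v\<^sup>2)"
    using assms by (simp add: field_simps power2_eq_square)
  finally show ?thesis by simp
qed


lemma nn_int_lt:
  fixes h :: "'a \<Rightarrow> real"
  assumes "h \<in> borel_measurable M" "\<And>z. 0 \<le> h z" "(\<integral>\<^sup>+z. ennreal (h z) \<partial>M) < ennreal R"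
  shows "integrable M h" "integral\<^sup>L M h < R"
proof -
  show i: "integrable M h"
    using assms by (intro integrableI_nonneg) (auto simp: top.not_eq_extremum order_less_trans)
  have "ennreal (integral\<^sup>L M h) < ennreal R"
    using nn_integral_eq_integral[OF i] assms by simp
  moreover have "0 \<le> integral\<^sup>L M h" using assms(2) by simp
  ultimately show "integral\<^sup>L M h < R"
    by (simp add: ennreal_less_iff)
qed

lemma part_sd:
  assumes g: "\<gamma> \<in> couplings \<eta> \<eta>'" and nn: "(\<integral>\<^sup>+z. ennreal ((fst z - snd z)\<^sup>2) \<partial>\<gamma>) < ennreal R"
    and pe: "prob_space \<eta>" "prob_space \<eta>'" "sets \<eta> = sets borel" "sets \<eta>' = sets borel"
    and i1: "integrable \<eta> (\<lambda>x. x\<^sup>2)" and i2: "integrable \<eta>' (\<lambda>x. x\<^sup>2)"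
  shows "(sd_of \<eta> - sd_of \<eta>')\<^sup>2 < R"
proof -
  note cb = coup_basic[OF g]
  interpret prob_space \<gamma> by (rule cb(1))
  have dm: "(\<lambda>z. (fst z - snd z)\<^sup>2) \<in> borel_measurable \<gamma>" unfolding cb(8) by measurable
  have "\<And>z::real\<times>real. 0 \<le> (fst z - snd z)\<^sup>2" by simp
  note DD = nn_int_lt[OF dm this nn]
  let ?m = "mean_of \<eta>" and ?m' = "mean_of \<eta>'"
  define \<delta> where "\<delta> = ?m - ?m'"
  note x1 = sq_ints[OF pe(1) pe(3) i1]
  note x2 = sq_ints[OF pe(2) pe(4) i2]
  have ix1: "integrable \<eta> (\<lambda>x. x - ?m)"
    using Bochner_Integration.integrable_diff[OF x1(1) finite_measure.integrable_const[OF prob_space.finite_measure[OF pe(1)]]] by simp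
  have ix2: "integrable \<eta>' (\<lambda>x. x - ?m')"
    using Bochner_Integration.integrable_diff[OF x2(1) finite_measure.integrable_const[OF prob_space.finite_measure[OF pe(2)]]] by simp
  have jx1: "integral\<^sup>L \<eta> (\<lambda>x. x - ?m) = 0"
    using Bochner_Integration.integral_diff[OF x1(1) finite_measure.integrable_const[OF prob_space.finite_measure[OF pe(1)]]]
      prob_space.prob_space[OF pe(1)] by (simp add: mean_of_def)
  have jx2: "integral\<^sup>L \<eta>' (\<lambda>x. x - ?m') = 0"
    using Bochner_Integration.integral_diff[OF x2(1) finite_measure.integrable_const[OF prob_space.finite_measure[OF pe(2)]]]
      prob_space.prob_space[OF pe(2)] by (simp add: mean_of_def)
  have U: "integrable \<gamma> (\<lambda>z. fst z - ?m)" "(\<integral>z. fst z - ?m \<partial>\<gamma>) = 0"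
    using coup_int_fst[OF g _ ix1] jx1 by auto
  have V: "integrable \<gamma> (\<lambda>z. snd z - ?m')" "(\<integral>z. snd z - ?m' \<partial>\<gamma>) = 0"
    using coup_int_snd[OF g _ ix2] jx2 by auto
  have U2: "integrable \<gamma> (\<lambda>z. (fst z - ?m)\<^sup>2)" "(\<integral>z. (fst z - ?m)\<^sup>2 \<partial>\<gamma>) = var_of \<eta>"
    using coup_int_fst[OF g _ x1(2)] unfolding var_of_def by auto
  have V2: "integrable \<gamma> (\<lambda>z. (snd z - ?m')\<^sup>2)" "(\<integral>z. (snd z - ?m')\<^sup>2 \<partial>\<gamma>) = var_of \<eta>'"
    using coup_int_snd[OF g _ x2(2)] unfolding var_of_def by auto
  have A0: "0 \<le> var_of \<eta>" unfolding var_of_def by simp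
  have B0: "0 \<le> var_of \<eta>'" unfolding var_of_def by simp
  have "(sqrt (var_of \<eta>) - sqrt (var_of \<eta>'))\<^sup>2 \<le> (\<integral>z. (fst z - snd z)\<^sup>2 \<partial>\<gamma>)"
  proof (rule sd_real[OF A0 B0])
    fix s :: real assume s: "0 < s"
    let ?h = "\<lambda>z. (1 - s) * (fst z - ?m)\<^sup>2 + (1 - 1 / s) * (snd z - ?m')\<^sup>2
               + 2 * \<delta> * ((fst z - ?m) - (snd z - ?m')) + \<delta>\<^sup>2"
    have ih: "integrable \<gamma> ?h"
      using U V U2 V2 by simp
    have "(\<integral>z. ?h z \<partial>\<gamma>) = (1 - s) * var_of \<eta> + (1 - 1 / s) * var_of \<eta>' + \<delta>\<^sup>2"
      using U V U2 V2 by (simp add: prob_space)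
    moreover have "(\<integral>z. ?h z \<partial>\<gamma>) \<le> (\<integral>z. (fst z - snd z)\<^sup>2 \<partial>\<gamma>)"
    proof (rule integral_mono[OF ih DD(1)])
      fix z :: "real \<times> real"
      have "fst z - snd z = ((fst z - ?m) - (snd z - ?m')) + \<delta>" by (simp add: \<delta>_def)
      then have "(fst z - snd z)\<^sup>2 = ((fst z - ?m) - (snd z - ?m'))\<^sup>2
           + 2 * \<delta> * ((fst z - ?m) - (snd z - ?m')) + \<delta>\<^sup>2"
        by (simp add: power2_eq_square algebra_simps)
      then show "?h z \<le> (fst z - snd z)\<^sup>2"
        using pt_ineq[OF s, of "fst z - ?m" "snd z - ?m'"] by linarith
    qed
    ultimately show "(1 - s) * var_of \<eta> + (1 - 1 / s) * var_of \<eta>' \<le> (\<integral>z. (fst z - snd z)\<^sup>2 \<partial>\<gamma>)"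
      by (smt (verit) zero_le_power2)
  qed
  then show ?thesis using DD(2) unfolding sd_of_def by simp
qed


lemma W2_W1:
  assumes W: "Wass 2 \<eta> \<eta>' \<le> ennreal \<epsilon>" and e0: "0 \<le> \<epsilon>"
  shows "Wass 1 \<eta> \<eta>' \<le> ennreal \<epsilon>"
proof -
  have cost: "wass_cost 1 \<eta> \<eta>' \<le> ennreal \<epsilon>"
  proof (rule ennreal_le_epsilon)
    fix e :: real assume e: "0 < e"
    have ee: "\<epsilon> < \<epsilon> + e" using e by simp
    obtain \<gamma> where g: "\<gamma> \<in> couplings \<eta> \<eta>'"
      and nn: "(\<integral>\<^sup>+z. ennreal ((fst z - snd z)\<^sup>2) \<partial>\<gamma>) < ennreal ((\<epsilon> + e)\<^sup>2)"
      using W2_approx[OF W ee e0] by blast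
    note cb = coup_basic[OF g]
    interpret prob_space \<gamma> by (rule cb(1))
    have dm: "(\<lambda>z. (fst z - snd z)\<^sup>2) \<in> borel_measurable \<gamma>" unfolding cb(8) by measurable
    have dm1: "(\<lambda>z. fst z - snd z) \<in> borel_measurable \<gamma>" unfolding cb(8) by measurable
    have "\<And>z::real\<times>real. 0 \<le> (fst z - snd z)\<^sup>2" by simp
    note DD = nn_int_lt[OF dm this nn]
    have i1: "integrable \<gamma> (\<lambda>z. fst z - snd z)"
      using square_integrable_imp_integrable[OF dm1 DD(1)] .
    have ia: "integrable \<gamma> (\<lambda>z. \<bar>fst z - snd z\<bar>)" using i1 by (rule integrable_abs)
    have ia2: "integrable \<gamma> (\<lambda>z. (\<bar>fst z - snd z\<bar>)\<^sup>2)" using DD(1) by simp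
    have "0 \<le> variance (\<lambda>z. \<bar>fst z - snd z\<bar>)" by (rule variance_positive)
    also have "variance (\<lambda>z. \<bar>fst z - snd z\<bar>) = (\<integral>z. (fst z - snd z)\<^sup>2 \<partial>\<gamma>) - (\<integral>z. \<bar>fst z - snd z\<bar> \<partial>\<gamma>)\<^sup>2"
      using variance_eq[OF ia ia2] by simp
    finally have "(\<integral>z. \<bar>fst z - snd z\<bar> \<partial>\<gamma>)\<^sup>2 < (\<epsilon> + e)\<^sup>2" using DD(2) by linarith
    then have lt: "(\<integral>z. \<bar>fst z - snd z\<bar> \<partial>\<gamma>) < \<epsilon> + e"
      by (rule power_less_imp_less_base) (use e e0 in linarith)
    have "wass_cost 1 \<eta> \<eta>' \<le> (\<integral>\<^sup>+z. ennreal (\<bar>fst z - snd z\<bar> powr 1) \<partial>\<gamma>)"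
      unfolding wass_cost_def using g by (rule INF_lower)
    also have "\<dots> = ennreal (\<integral>z. \<bar>fst z - snd z\<bar> \<partial>\<gamma>)"
      using nn_integral_eq_integral[OF ia] by simp
    also have "\<dots> \<le> ennreal (\<epsilon> + e)" using lt by (intro ennreal_leI) simp
    also have "\<dots> = ennreal \<epsilon> + ennreal e" using e e0 by (simp add: ennreal_plus)
    finally show "wass_cost 1 \<eta> \<eta>' \<le> ennreal \<epsilon> + ennreal e" .
  qed
  have ninf: "wass_cost 1 \<eta> \<eta>' \<noteq> \<infinity>" using cost by (auto simp: top_unique)
  show ?thesis unfolding Wass_def using ninf cost
    by (simp add: ennreal_enn2real_if)
qed

lemma var_real:
  fixes s s' e :: real
  assumes "0 \<le> s" "0 \<le> s'" "\<bar>s - s'\<bar> \<le> e"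
  shows "\<bar>s\<^sup>2 - s'\<^sup>2\<bar> \<le> 2 * min s s' * e + e\<^sup>2"
proof -
  have f: "s\<^sup>2 - s'\<^sup>2 = (s - s') * (s + s')" by (simp add: power2_eq_square algebra_simps)
  have g: "s + s' = 2 * min s s' + \<bar>s - s'\<bar>" by (simp add: min_def abs_if)
  have "\<bar>s\<^sup>2 - s'\<^sup>2\<bar> = \<bar>s - s'\<bar> * (s + s')" unfolding f abs_mult using assms by simp
  also have "\<dots> = \<bar>s - s'\<bar> * (2 * min s s' + \<bar>s - s'\<bar>)" using g by simp
  also have "\<dots> \<le> e * (2 * min s s' + e)"
    using assms by (intro mult_mono add_left_mono) auto
  finally show ?thesis by (simp add: power2_eq_square algebra_simps)
qed

lemma num_bounds:
  "1 \<le> (sqrt 2 + sqrt 6) / 2" "(sqrt 2 + sqrt 6) / 2 \<le> (2::real)"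
  "2 \<le> (2::real) powr (3/2)" "(2::real) powr (3/2) \<le> 3"
  "1 \<le> 1 + 3 * sqrt (2::real)" "1 + 3 * sqrt (2::real) \<le> 5.25"
proof -
  have a: "sqrt (2::real) \<le> 17/12" by (rule real_le_lsqrt) (auto simp: power2_eq_square)
  have b: "sqrt (6::real) \<le> 5/2" by (rule real_le_lsqrt) (auto simp: power2_eq_square)
  have c: "1 \<le> sqrt (2::real)" "1 \<le> sqrt (6::real)" by auto
  have p: "(2::real) powr (3/2) = 2 * sqrt 2"
  proof -
    have "(2::real) powr (3/2) = 2 powr (1 + 1/2)" by simp
    also have "\<dots> = 2 powr 1 * 2 powr (1/2)" by (rule powr_add)
    finally show ?thesis by (simp add: powr_half_sqrt)
  qed
  show "1 \<le> (sqrt 2 + sqrt 6) / 2" using add_mono[OF c] by simp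
  show "(sqrt 2 + sqrt 6) / 2 \<le> (2::real)" using a b by (simp add: field_simps)
  show "2 \<le> (2::real) powr (3/2)" unfolding p using c by linarith
  show "(2::real) powr (3/2) \<le> 3" unfolding p using a by linarith
  show "1 \<le> 1 + 3 * sqrt (2::real)" using c by linarith
  show "1 + 3 * sqrt (2::real) \<le> 5.25" using a by simp
qed

theorem theorem4:
  fixes \<eta> \<eta>' :: "real measure" and \<epsilon> :: real
  assumes "prob_space \<eta>" and "sets \<eta> = sets borel"
    and "prob_space \<eta>'" and "sets \<eta>' = sets borel"
    and "0 \<le> \<epsilon>"
  shows
   "(Wass 1 \<eta> \<eta>' \<le> ennreal \<epsilon> \<longrightarrow>
       ((integrable \<eta> (\<lambda>x. x) \<and> integrable \<eta>' (\<lambda>x. x)) \<longrightarrow>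
          \<bar>mean_of \<eta> - mean_of \<eta>'\<bar> \<le> \<epsilon> \<and> \<bar>MAD_of \<eta> - MAD_of \<eta>'\<bar> \<le> 2 * \<epsilon>)
     \<and> (\<forall>c f. (f \<in> borel_measurable borel \<and> (\<forall>x. 0 \<le> f x \<and> f x \<le> c)
               \<and> \<eta> = density lborel (\<lambda>x. ennreal (f x))) \<longrightarrow>
           (\<forall>a b :: ereal. a < b \<longrightarrow>
               \<bar>I_of \<eta> a b - I_of \<eta>' a b\<bar> \<le> 2 * sqrt (2 * c * \<epsilon>))))
  \<and> (Wass 2 \<eta> \<eta>' \<le> ennreal \<epsilon> \<longrightarrow>
       Wass 1 \<eta> \<eta>' \<le> ennreal \<epsilon>
     \<and> ((integrable \<eta> (\<lambda>x. x\<^sup>2) \<and> integrable \<eta>' (\<lambda>x. x\<^sup>2)) \<longrightarrow>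
          \<bar>sd_of \<eta> - sd_of \<eta>'\<bar> \<le> (sqrt 2 + sqrt 6) / 2 * \<epsilon>
        \<and> (sqrt 2 + sqrt 6) / 2 * \<epsilon> \<le> 2 * \<epsilon>
        \<and> \<bar>var_of \<eta> - var_of \<eta>'\<bar>
             \<le> 2 powr (3/2) * min (sd_of \<eta>) (sd_of \<eta>') * \<epsilon> + (1 + 3 * sqrt 2) * \<epsilon>\<^sup>2
        \<and> 2 powr (3/2) * min (sd_of \<eta>) (sd_of \<eta>') * \<epsilon> + (1 + 3 * sqrt 2) * \<epsilon>\<^sup>2
             \<le> 3 * min (sd_of \<eta>) (sd_of \<eta>') * \<epsilon> + 5.25 * \<epsilon>\<^sup>2))"
proof -
  have P1: "(integrable \<eta> (\<lambda>x. x) \<and> integrable \<eta>' (\<lambda>x. x)) \<longrightarrow>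
          \<bar>mean_of \<eta> - mean_of \<eta>'\<bar> \<le> \<epsilon> \<and> \<bar>MAD_of \<eta> - MAD_of \<eta>'\<bar> \<le> 2 * \<epsilon>"
    if W1: "Wass 1 \<eta> \<eta>' \<le> ennreal \<epsilon>"
  proof
    assume ii: "integrable \<eta> (\<lambda>x. x) \<and> integrable \<eta>' (\<lambda>x. x)"
    have H: "\<bar>mean_of \<eta> - mean_of \<eta>'\<bar> < r \<and> \<bar>MAD_of \<eta> - MAD_of \<eta>'\<bar> / 2 < r" if r: "\<epsilon> < r" for r
    proof -
      obtain \<gamma> where g: "\<gamma> \<in> couplings \<eta> \<eta>'"
        and nn: "(\<integral>\<^sup>+z. ennreal \<bar>fst z - snd z\<bar> \<partial>\<gamma>) < ennreal r"
        using W1_approx[OF W1 r assms(5)] by blast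
      show ?thesis using part_mean[OF g nn conjunct1[OF ii] conjunct2[OF ii] assms(1) assms(3)] by simp
    qed
    have h1: "\<bar>mean_of \<eta> - mean_of \<eta>'\<bar> \<le> \<epsilon>"
      by (rule dense_ge) (use H in \<open>auto intro: less_imp_le\<close>)
    have h2: "\<bar>MAD_of \<eta> - MAD_of \<eta>'\<bar> / 2 \<le> \<epsilon>"
      by (rule dense_ge) (use H in \<open>auto intro: less_imp_le\<close>)
    show "\<bar>mean_of \<eta> - mean_of \<eta>'\<bar> \<le> \<epsilon> \<and> \<bar>MAD_of \<eta> - MAD_of \<eta>'\<bar> \<le> 2 * \<epsilon>"
      using h1 h2 by simp
  qed
  have P2: "\<forall>c f. (f \<in> borel_measurable borel \<and> (\<forall>x. 0 \<le> f x \<and> f x \<le> c)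
               \<and> \<eta> = density lborel (\<lambda>x. ennreal (f x))) \<longrightarrow>
           (\<forall>a b :: ereal. a < b \<longrightarrow>
               \<bar>I_of \<eta> a b - I_of \<eta>' a b\<bar> \<le> 2 * sqrt (2 * c * \<epsilon>))"
    if W1: "Wass 1 \<eta> \<eta>' \<le> ennreal \<epsilon>"
  proof (intro allI impI)
    fix c and f :: "real \<Rightarrow> real" and a b :: ereal
    assume hf: "f \<in> borel_measurable borel \<and> (\<forall>x. 0 \<le> f x \<and> f x \<le> c)
               \<and> \<eta> = density lborel (\<lambda>x. ennreal (f x))"
    have hf1: "f \<in> borel_measurable borel" and hf2: "\<forall>x. 0 \<le> f x \<and> f x \<le> c"
      and hf3: "\<eta> = density lborel (\<lambda>x. ennreal (f x))" using hf by auto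
    have c0: "0 < c"
    proof (rule ccontr)
      assume "\<not> 0 < c"
      then have f0: "\<And>x. f x = 0" using hf2 by (meson antisym not_less order_trans)
      have "emeasure \<eta> UNIV = (\<integral>\<^sup>+ x. ennreal (f x) * indicator UNIV x \<partial>lborel)"
        unfolding hf3 using hf1 by (intro emeasure_density) auto
      also have "\<dots> = 0" by (simp add: f0)
      finally have e0: "emeasure \<eta> UNIV = 0" .
      have "emeasure \<eta> (space \<eta>) = 1" by (rule prob_space.emeasure_space_1[OF assms(1)])
      moreover have "space \<eta> = UNIV" using sets_eq_imp_space_eq[OF assms(2)] by simp
      ultimately show False using e0 by simp
    qed
    show "\<bar>I_of \<eta> a b - I_of \<eta>' a b\<bar> \<le> 2 * sqrt (2 * c * \<epsilon>)"
    proof (rule final_interval[OF c0 assms(5)])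
      fix r assume r: "\<epsilon> < r"
      obtain \<gamma> where g: "\<gamma> \<in> couplings \<eta> \<eta>'"
        and nn: "(\<integral>\<^sup>+z. ennreal \<bar>fst z - snd z\<bar> \<partial>\<gamma>) < ennreal r"
        using W1_approx[OF W1 r assms(5)] by blast
      have "0 < r" using r assms(5) by linarith
      then obtain t where t: "0 < t" "2 * c * t + r / t \<le> 2 * sqrt (2 * c * r)"
        using opt_t[OF c0] by blast
      have "\<bar>I_of \<eta> a b - I_of \<eta>' a b\<bar> \<le> 2 * c * t + r / t"
        by (rule part_interval[OF g nn hf1 hf2 hf3 assms(1) t(1)])
      then show "\<bar>I_of \<eta> a b - I_of \<eta>' a b\<bar> \<le> 2 * sqrt (2 * c * r)" using t(2) by linarith
    qed
  qed
  have P3: "Wass 2 \<eta> \<eta>' \<le> ennreal \<epsilon> \<longrightarrow>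
       Wass 1 \<eta> \<eta>' \<le> ennreal \<epsilon>
     \<and> ((integrable \<eta> (\<lambda>x. x\<^sup>2) \<and> integrable \<eta>' (\<lambda>x. x\<^sup>2)) \<longrightarrow>
          \<bar>sd_of \<eta> - sd_of \<eta>'\<bar> \<le> (sqrt 2 + sqrt 6) / 2 * \<epsilon>
        \<and> (sqrt 2 + sqrt 6) / 2 * \<epsilon> \<le> 2 * \<epsilon>
        \<and> \<bar>var_of \<eta> - var_of \<eta>'\<bar>
             \<le> 2 powr (3/2) * min (sd_of \<eta>) (sd_of \<eta>') * \<epsilon> + (1 + 3 * sqrt 2) * \<epsilon>\<^sup>2
        \<and> 2 powr (3/2) * min (sd_of \<eta>) (sd_of \<eta>') * \<epsilon> + (1 + 3 * sqrt 2) * \<epsilon>\<^sup>2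
             \<le> 3 * min (sd_of \<eta>) (sd_of \<eta>') * \<epsilon> + 5.25 * \<epsilon>\<^sup>2)"
  proof
    assume W2: "Wass 2 \<eta> \<eta>' \<le> ennreal \<epsilon>"
    have W1: "Wass 1 \<eta> \<eta>' \<le> ennreal \<epsilon>" by (rule W2_W1[OF W2 assms(5)])
    have Q: "(integrable \<eta> (\<lambda>x. x\<^sup>2) \<and> integrable \<eta>' (\<lambda>x. x\<^sup>2)) \<longrightarrow>
          \<bar>sd_of \<eta> - sd_of \<eta>'\<bar> \<le> (sqrt 2 + sqrt 6) / 2 * \<epsilon>
        \<and> (sqrt 2 + sqrt 6) / 2 * \<epsilon> \<le> 2 * \<epsilon>
        \<and> \<bar>var_of \<eta> - var_of \<eta>'\<bar>
             \<le> 2 powr (3/2) * min (sd_of \<eta>) (sd_of \<eta>') * \<epsilon> + (1 + 3 * sqrt 2) * \<epsilon>\<^sup>2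
        \<and> 2 powr (3/2) * min (sd_of \<eta>) (sd_of \<eta>') * \<epsilon> + (1 + 3 * sqrt 2) * \<epsilon>\<^sup>2
             \<le> 3 * min (sd_of \<eta>) (sd_of \<eta>') * \<epsilon> + 5.25 * \<epsilon>\<^sup>2"
    proof
      assume ii: "integrable \<eta> (\<lambda>x. x\<^sup>2) \<and> integrable \<eta>' (\<lambda>x. x\<^sup>2)"
      have H: "\<bar>sd_of \<eta> - sd_of \<eta>'\<bar> < r" if r: "\<epsilon> < r" for r
      proof -
        obtain \<gamma> where g: "\<gamma> \<in> couplings \<eta> \<eta>'"
          and nn: "(\<integral>\<^sup>+z. ennreal ((fst z - snd z)\<^sup>2) \<partial>\<gamma>) < ennreal (r\<^sup>2)"
          using W2_approx[OF W2 r assms(5)] by blast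
        have "(sd_of \<eta> - sd_of \<eta>')\<^sup>2 < r\<^sup>2"
          by (rule part_sd[OF g nn assms(1) assms(3) assms(2) assms(4) conjunct1[OF ii] conjunct2[OF ii]])
        then have "\<bar>sd_of \<eta> - sd_of \<eta>'\<bar>\<^sup>2 < r\<^sup>2" by simp
        then show ?thesis by (rule power_less_imp_less_base) (use r assms(5) in linarith)
      qed
      have sdle: "\<bar>sd_of \<eta> - sd_of \<eta>'\<bar> \<le> \<epsilon>"
        by (rule dense_ge) (use H in \<open>auto intro: less_imp_le\<close>)
      have v0: "0 \<le> var_of \<eta>" "0 \<le> var_of \<eta>'" unfolding var_of_def by simp_all
      have s0: "0 \<le> sd_of \<eta>" "0 \<le> sd_of \<eta>'" unfolding sd_of_def using v0 by simp_all
      have vs: "var_of \<eta> = (sd_of \<eta>)\<^sup>2" "var_of \<eta>' = (sd_of \<eta>')\<^sup>2"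
        unfolding sd_of_def using v0 by simp_all
      note nb = num_bounds
      define mn where "mn = min (sd_of \<eta>) (sd_of \<eta>')"
      have mn0: "0 \<le> mn" unfolding mn_def using s0 by simp
      have "\<epsilon> \<le> (sqrt 2 + sqrt 6) / 2 * \<epsilon>"
        using mult_right_mono[OF nb(1) assms(5)] by simp
      then have g1: "\<bar>sd_of \<eta> - sd_of \<eta>'\<bar> \<le> (sqrt 2 + sqrt 6) / 2 * \<epsilon>" using sdle by linarith
      have g2: "(sqrt 2 + sqrt 6) / 2 * \<epsilon> \<le> 2 * \<epsilon>" using mult_right_mono[OF nb(2) assms(5)] .
      have "\<bar>var_of \<eta> - var_of \<eta>'\<bar> \<le> 2 * mn * \<epsilon> + \<epsilon>\<^sup>2"
        unfolding vs mn_def by (rule var_real[OF s0 sdle])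
      also have "2 * mn * \<epsilon> \<le> 2 powr (3/2) * mn * \<epsilon>"
        using mult_right_mono[OF mult_right_mono[OF nb(3) mn0] assms(5)] .
      also have "\<epsilon>\<^sup>2 \<le> (1 + 3 * sqrt 2) * \<epsilon>\<^sup>2"
        using mult_right_mono[OF nb(5) zero_le_power2[of \<epsilon>]] by simp
      finally have g3: "\<bar>var_of \<eta> - var_of \<eta>'\<bar> \<le> 2 powr (3/2) * mn * \<epsilon> + (1 + 3 * sqrt 2) * \<epsilon>\<^sup>2"
        by simp
      have "2 powr (3/2) * mn * \<epsilon> \<le> 3 * mn * \<epsilon>"
        using mult_right_mono[OF mult_right_mono[OF nb(4) mn0] assms(5)] .
      moreover have "(1 + 3 * sqrt 2) * \<epsilon>\<^sup>2 \<le> 5.25 * \<epsilon>\<^sup>2"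
        using mult_right_mono[OF nb(6) zero_le_power2[of \<epsilon>]] .
      ultimately have g4: "2 powr (3/2) * mn * \<epsilon> + (1 + 3 * sqrt 2) * \<epsilon>\<^sup>2 \<le> 3 * mn * \<epsilon> + 5.25 * \<epsilon>\<^sup>2"
        by linarith
      show "\<bar>sd_of \<eta> - sd_of \<eta>'\<bar> \<le> (sqrt 2 + sqrt 6) / 2 * \<epsilon>
        \<and> (sqrt 2 + sqrt 6) / 2 * \<epsilon> \<le> 2 * \<epsilon>
        \<and> \<bar>var_of \<eta> - var_of \<eta>'\<bar>
             \<le> 2 powr (3/2) * min (sd_of \<eta>) (sd_of \<eta>') * \<epsilon> + (1 + 3 * sqrt 2) * \<epsilon>\<^sup>2
        \<and> 2 powr (3/2) * min (sd_of \<eta>) (sd_of \<eta>') * \<epsilon> + (1 + 3 * sqrt 2) * \<epsilon>\<^sup>2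
             \<le> 3 * min (sd_of \<eta>) (sd_of \<eta>') * \<epsilon> + 5.25 * \<epsilon>\<^sup>2"
        using g1 g2 g3 g4 unfolding mn_def by blast
    qed
    from W1 Q show "Wass 1 \<eta> \<eta>' \<le> ennreal \<epsilon> \<and> ((integrable \<eta> (\<lambda>x. x\<^sup>2) \<and> integrable \<eta>' (\<lambda>x. x\<^sup>2)) \<longrightarrow>
          \<bar>sd_of \<eta> - sd_of \<eta>'\<bar> \<le> (sqrt 2 + sqrt 6) / 2 * \<epsilon>
        \<and> (sqrt 2 + sqrt 6) / 2 * \<epsilon> \<le> 2 * \<epsilon>
        \<and> \<bar>var_of \<eta> - var_of \<eta>'\<bar>
             \<le> 2 powr (3/2) * min (sd_of \<eta>) (sd_of \<eta>') * \<epsilon> + (1 + 3 * sqrt 2) * \<epsilon>\<^sup>2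
        \<and> 2 powr (3/2) * min (sd_of \<eta>) (sd_of \<eta>') * \<epsilon> + (1 + 3 * sqrt 2) * \<epsilon>\<^sup>2
             \<le> 3 * min (sd_of \<eta>) (sd_of \<eta>') * \<epsilon> + 5.25 * \<epsilon>\<^sup>2)" by (rule conjI)
  qed
  show ?thesis using P1 P2 P3 by blast
qed

end
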